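(* Let $n\ge2$, $c\in(0,\infty)$, and let $\Sigma_n\in\mathbb{R}^{n\times n}$ have entries $(\Sigma_n)_{ij}=\frac{\pi}{i+j}+\frac{4c\pi^2}{(i+1)(j+1)}$ if $c\in(0,1]$ and $(\Sigma_n)_{ij}=\frac{\pi}{c(i+j)}+\frac{4\pi^2}{(i+1)(j+1)}$ if $c\in(1,\infty)$. Then $\Sigma_n=GG^t$ with $G=(g_{ij})$ lower triangular ($g_{ij}=0$ for $j>i$) where, for $c\in(0,1]$, $$g_{i1}=\frac{2}{i+1}\sqrt{\frac{\pi(1+2c\pi)}{2}}\ (i\ge1),\qquad g_{ij}=\frac{\prod_{k=1}^{j-1}(i-k)\prod_{k=1}^{j}(j+k)}{\prod_{k=1}^{j-1}(j-k)\prod_{k=1}^{j}(i+k)}\sqrt{\frac{\pi\prod_{k=1}^{j-1}(j-k)^2}{2j\prod_{k=1}^{j-1}(j+k)^2}}\ (1<j\le i),$$ and for $c\in(1,\infty)$ the same formulas hold with the radicands replaced by $\frac{\pi(1+2c\pi)}{2c}$ and $\frac{\pi\prod_{k=1}^{j-1}(j-k)^2}{2cj\prod_{k=1}^{j-1}(j+k)^2}$, respectively.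
   Context: $\Sigma_n$ is the asymptotic covariance matrix, in the critical regime $t\delta_t^d\to c$, of the vector $(\tilde L_t^{(0)},\dots,\tilde L_t^{(n-1)})$ of normalized length power functionals in dimension $d=2$ for a window of volume $1$. *)

theory Defs
  imports "HOL-Analysis.Analysis" "Jordan_Normal_Form.Matrix"
begin

text \<open>Entries use the paper's 1-based indices i, j.\<close>

definition Sigma_entry :: "real \<Rightarrow> nat \<Rightarrow> nat \<Rightarrow> real" where
  "Sigma_entry c i j =
     (if c \<le> 1 then pi / (real i + real j) + 4 * c * pi^2 / ((real i + 1) * (real j + 1))
      else pi / (c * (real i + real j)) + 4 * pi^2 / ((real i + 1) * (real j + 1)))"

definition radicand1 :: "real \<Rightarrow> real" where
  "radicand1 c = (if c \<le> 1 then pi * (1 + 2 * c * pi) / 2 else pi * (1 + 2 * c * pi) / (2 * c))"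

definition radicand2 :: "real \<Rightarrow> nat \<Rightarrow> real" where
  "radicand2 c j =
     (if c \<le> 1
      then pi * (\<Prod>k=1..j-1. (real j - real k)^2) / (2 * real j * (\<Prod>k=1..j-1. (real j + real k)^2))
      else pi * (\<Prod>k=1..j-1. (real j - real k)^2) / (2 * c * real j * (\<Prod>k=1..j-1. (real j + real k)^2)))"

definition G_entry :: "real \<Rightarrow> nat \<Rightarrow> nat \<Rightarrow> real" where
  "G_entry c i j =
     (if j > i then 0
      else if j = 1 then 2 / (real i + 1) * sqrt (radicand1 c)
      else ((\<Prod>k=1..j-1. (real i - real k)) * (\<Prod>k=1..j. (real j + real k)))
           / ((\<Prod>k=1..j-1. (real j - real k)) * (\<Prod>k=1..j. (real i + real k)))
           * sqrt (radicand2 c j))"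

definition Sigma_mat :: "nat \<Rightarrow> real \<Rightarrow> real mat" where
  "Sigma_mat n c = mat n n (\<lambda>(i, j). Sigma_entry c (i + 1) (j + 1))"

definition G_mat :: "nat \<Rightarrow> real \<Rightarrow> real mat" where
  "G_mat n c = mat n n (\<lambda>(i, j). G_entry c (i + 1) (j + 1))"

end

theory Submission
  imports Defs
begin

definition ff :: "real \<Rightarrow> nat \<Rightarrow> real" where
  "ff x k = (\<Prod>m=1..k-1. (x - real m)) / (\<Prod>m=1..k. (x + real m))"

lemma rem:
  fixes x y :: real
  assumes "x > 0" "y > 0"
  shows "1/(x+y) - (\<Sum>k=1..N. 2 * real k * ff x k * ff y k)
     = (\<Prod>m=1..N. (x - real m) * (y - real m)) / ((x+y) * (\<Prod>m=1..N. (x + real m) * (y + real m)))"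
proof (induction N)
  case 0
  then show ?case by simp
next
  case (Suc N)
  define P where "P = (\<Prod>m=1..N. (x - real m) * (y - real m))"
  define Q where "Q = (\<Prod>m=1..N. (x + real m) * (y + real m))"
  have Q0: "Q > 0" unfolding Q_def using assms by (intro prod_pos) auto
  have fx: "ff x (Suc N) = (\<Prod>m=1..N. (x - real m)) / ((\<Prod>m=1..N. (x + real m)) * (x + real (Suc N)))"
    unfolding ff_def by simp
  have fy: "ff y (Suc N) = (\<Prod>m=1..N. (y - real m)) / ((\<Prod>m=1..N. (y + real m)) * (y + real (Suc N)))"
    unfolding ff_def by simp
  have ff2: "ff x (Suc N) * ff y (Suc N) = P / (Q * ((x + real (Suc N)) * (y + real (Suc N))))"
    unfolding fx fy P_def Q_def by (simp add: prod.distrib)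
  have "1/(x+y) - (\<Sum>k=1..Suc N. 2 * real k * ff x k * ff y k)
      = P / ((x+y) * Q) - 2 * real (Suc N) * (ff x (Suc N) * ff y (Suc N))"
    using Suc.IH unfolding P_def Q_def by (simp add: algebra_simps)
  also have "\<dots> = P * ((x - real (Suc N)) * (y - real (Suc N))) / ((x+y) * (Q * ((x + real (Suc N)) * (y + real (Suc N)))))"
  proof -
    define a where "a = x + real (Suc N)"
    define b where "b = y + real (Suc N)"
    have a0: "a > 0" "b > 0" "x + y > 0" using assms unfolding a_def b_def by auto
    have key: "a*b - 2 * real (Suc N) * (x+y) = (x - real (Suc N)) * (y - real (Suc N))"
      unfolding a_def b_def by (simp add: algebra_simps)
    define s where "s = 2 * real (Suc N)"
    have e1: "P / ((x+y) * Q) = P*(a*b) / ((x+y) * (Q * (a*b)))" using a0 Q0 by simp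
    have e2: "s * (P / (Q * (a*b))) = P*(s*(x+y)) / ((x+y) * (Q * (a*b)))" using a0 Q0 by simp
    have "P / ((x+y) * Q) - s * (P / (Q * (a*b)))
        = P * (a*b - s * (x+y)) / ((x+y) * (Q * (a*b)))"
      unfolding e1 e2 by (simp add: diff_divide_distrib right_diff_distrib)
    then have "P / ((x+y) * Q) - 2 * real (Suc N) * (P / (Q * (a*b)))
        = P * (a*b - 2 * real (Suc N) * (x+y)) / ((x+y) * (Q * (a*b)))"
      unfolding s_def .
    then show ?thesis unfolding ff2 key a_def[symmetric] b_def[symmetric] by simp
  qed
  also have "\<dots> = (\<Prod>m=1..Suc N. (x - real m) * (y - real m)) / ((x+y) * (\<Prod>m=1..Suc N. (x + real m) * (y + real m)))"
    unfolding P_def Q_def by simp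
  finally show ?case .
qed

lemma cauchy:
  assumes "1 \<le> i" "1 \<le> j" "i \<le> N"
  shows "1/(real i + real j) = (\<Sum>k=1..N. 2 * real k * ff (real i) k * ff (real j) k)"
proof -
  have "(\<Prod>m=1..N. (real i - real m) * (real j - real m)) = 0"
    using assms by (intro prod_zero) (auto intro!: bexI[of _ i])
  then have "1/(real i + real j) - (\<Sum>k=1..N. 2 * real k * ff (real i) k * ff (real j) k) = 0"
    using rem[of "real i" "real j" N] assms by simp
  then show ?thesis by simp
qed

definition tt :: "real \<Rightarrow> nat \<Rightarrow> real" where
  "tt c k = (if k = 1 then 2 * sqrt (radicand1 c)
     else (\<Prod>m=1..k. (real k + real m)) / (\<Prod>m=1..k-1. (real k - real m)) * sqrt (radicand2 c k))"

definition sq :: "real \<Rightarrow> nat \<Rightarrow> real" where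
  "sq c k = (if c \<le> 1 then 1 else 1/c) * (2 * real k * pi)
     + (if k = 1 then (if c \<le> 1 then 4 * c * pi^2 else 4 * pi^2) else 0)"

lemma ff_zero:
  assumes "i < k" "1 \<le> i"
  shows "ff (real i) k = 0"
proof -
  have "(\<Prod>m=1..k-1. (real i - real m)) = 0"
    using assms by (intro prod_zero) (auto intro!: bexI[of _ i])
  then show ?thesis unfolding ff_def by simp
qed

lemma G_ff:
  assumes "1 \<le> k" "1 \<le> i"
  shows "G_entry c i k = ff (real i) k * tt c k"
proof (cases "k > i")
  case True
  then show ?thesis using ff_zero[OF True assms(2)] unfolding G_entry_def by simp
next
  case False
  show ?thesis
  proof (cases "k = 1")
    case True
    then show ?thesis using False unfolding G_entry_def ff_def tt_def by simp
  next
    case k1: False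
    then show ?thesis using False unfolding G_entry_def ff_def tt_def by (simp add: mult_ac)
  qed
qed

lemma tt_sq:
  assumes "1 \<le> k" "c > 0"
  shows "tt c k * tt c k = sq c k"
proof (cases "k = 1")
  case True
  have r: "radicand1 c \<ge> 0" unfolding radicand1_def using assms by auto
  have "tt c k * tt c k = 4 * radicand1 c" unfolding tt_def using True r
    by (simp add: algebra_simps)
  then show ?thesis using True assms unfolding sq_def radicand1_def
    by (auto simp: field_simps power2_eq_square)
next
  case False
  define A where "A = (\<Prod>m=1..k-1. (real k - real m))"
  define B where "B = (\<Prod>m=1..k-1. (real k + real m))"
  have A0: "A \<noteq> 0" unfolding A_def by (auto simp: prod_zero_iff)
  have B0: "B > 0" unfolding B_def by (intro prod_pos) auto
  have kk: "{1..k} = insert k {1..k-1}" using assms by auto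
  have BB: "(\<Prod>m=1..k. (real k + real m)) = B * (2 * real k)"
    unfolding B_def kk using assms by (subst prod.insert) (auto simp: algebra_simps)
  have r: "radicand2 c k \<ge> 0" unfolding radicand2_def using assms
    by (auto intro!: divide_nonneg_pos mult_nonneg_nonneg mult_pos_pos prod_pos prod_nonneg)
  have A2: "(\<Prod>m=1..k-1. (real k - real m)^2) = A^2" unfolding A_def by (simp add: prod_power_distrib)
  have B2: "(\<Prod>m=1..k-1. (real k + real m)^2) = B^2" unfolding B_def by (simp add: prod_power_distrib)
  have "tt c k * tt c k = (B * (2 * real k) / A)^2 * radicand2 c k"
    unfolding tt_def BB[symmetric] A_def[symmetric] using False r by (simp add: power2_eq_square)
  also have "\<dots> = sq c k"
    unfolding radicand2_def sq_def A2 B2 using False A0 B0 assms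
    by (auto simp: field_simps power2_eq_square)
  finally show ?thesis .
qed

lemma shift_sum: "(\<Sum>k<n. f (Suc k)) = (\<Sum>k=1..n. (f k :: real))"
  by (induction n) auto

lemma entry_sum:
  assumes "1 \<le> i" "1 \<le> j" "i \<le> N" "c > 0"
  shows "(\<Sum>k=1..N. G_entry c i k * G_entry c j k) = Sigma_entry c i j"
proof -
  define \<alpha> where "\<alpha> = (if c \<le> 1 then 1 else 1/c)"
  define \<beta> where "\<beta> = (if c \<le> 1 then 4 * c * pi^2 else 4 * pi^2)"
  have N1: "1 \<le> N" using assms by simp
  have "(\<Sum>k=1..N. G_entry c i k * G_entry c j k)
      = (\<Sum>k=1..N. (\<alpha> * pi) * (2 * real k * ff (real i) k * ff (real j) k)
           + (if k = 1 then \<beta> * (ff (real i) k * ff (real j) k) else 0))"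
  proof (rule sum.cong[OF refl])
    fix k assume "k \<in> {1..N}"
    then have k: "1 \<le> k" by simp
    have "G_entry c i k * G_entry c j k = ff (real i) k * ff (real j) k * (tt c k * tt c k)"
      using G_ff[OF k assms(1)] G_ff[OF k assms(2)] by (simp add: mult_ac)
    also have "\<dots> = ff (real i) k * ff (real j) k * sq c k" using tt_sq[OF k assms(4)] by simp
    finally show "G_entry c i k * G_entry c j k = (\<alpha> * pi) * (2 * real k * ff (real i) k * ff (real j) k)
           + (if k = 1 then \<beta> * (ff (real i) k * ff (real j) k) else 0)"
      unfolding sq_def \<alpha>_def \<beta>_def by (auto simp: algebra_simps)
  qed
  also have "\<dots> = (\<alpha> * pi) * (\<Sum>k=1..N. 2 * real k * ff (real i) k * ff (real j) k)
      + \<beta> * (ff (real i) 1 * ff (real j) 1)"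
    using N1 by (simp add: sum.distrib sum_distrib_left)
  also have "\<dots> = (\<alpha> * pi) * (1 / (real i + real j)) + \<beta> * (1/(real i + 1) * (1 / (real j + 1)))"
    using cauchy[OF assms(1-3)] by (simp add: ff_def)
  also have "\<dots> = Sigma_entry c i j"
  proof -
    have p: "real i + real j > 0" "real i + 1 > 0" "real j + 1 > 0" using assms by auto
    show ?thesis
    proof (cases "c \<le> 1")
      case True
      then show ?thesis unfolding Sigma_entry_def \<alpha>_def \<beta>_def using p by simp
    next
      case False
      then show ?thesis unfolding Sigma_entry_def \<alpha>_def \<beta>_def using p by simp
    qed
  qed
  finally show ?thesis .
qed

theorem corollary7p13:
  fixes n :: nat and c :: real
  assumes "n \<ge> 2" and "c > 0"
  shows "Sigma_mat n c = G_mat n c * transpose_mat (G_mat n c)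
         \<and> (\<forall>i<n. \<forall>j<n. j > i \<longrightarrow> G_mat n c $$ (i, j) = 0)"
proof
  show "Sigma_mat n c = G_mat n c * transpose_mat (G_mat n c)"
  proof (rule eq_matI)
    fix i j assume ij: "i < dim_row (G_mat n c * transpose_mat (G_mat n c))"
      "j < dim_col (G_mat n c * transpose_mat (G_mat n c))"
    then have i: "i < n" and j: "j < n" by (auto simp: G_mat_def)
    have "(G_mat n c * transpose_mat (G_mat n c)) $$ (i, j)
        = (\<Sum>k<n. G_entry c (Suc i) (Suc k) * G_entry c (Suc j) (Suc k))"
      using i j by (simp add: G_mat_def scalar_prod_def row_def col_def lessThan_atLeast0)
    also have "\<dots> = (\<Sum>k=1..n. G_entry c (Suc i) k * G_entry c (Suc j) k)"
      by (rule shift_sum)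
    also have "\<dots> = Sigma_entry c (Suc i) (Suc j)"
      using i assms by (intro entry_sum) auto
    finally show "Sigma_mat n c $$ (i, j) = (G_mat n c * transpose_mat (G_mat n c)) $$ (i, j)"
      using i j by (simp add: Sigma_mat_def)
  qed (auto simp: Sigma_mat_def G_mat_def)
next
  show "\<forall>i<n. \<forall>j<n. j > i \<longrightarrow> G_mat n c $$ (i, j) = 0"
    by (auto simp: G_mat_def G_entry_def)
qed

end
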